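(* Let $G$ be a right $\ell$-group with a strong order unit $s$, and let $g \in G^-$. Then $g$ has a unique right-normal factorization. It is given by $g = g_k g_{k-1}\cdots g_1$, where $k = \min\{ i \geq 0 : g \geq s^{-i}\}$ and \[ g_i = (g \vee s^{-i})(g \vee s^{-(i-1)})^{-1} \qquad (1 \leq i \leq k). \]
   Context: A right $\ell$-group is a group $G$ (identity $e$) with a partial order $\leq$ that is right-invariant ($x \leq y \Rightarrow xz \leq yz$ for all $x,y,z$) and under which $G$ is a lattice with meet $\wedge$ and join $\vee$. $G^- := \{g \in G : g \leq e\}$ is the negative cone, and $[a,b] := \{x : a \leq x \leq b\}$. An element $s \in G$ is normal if $x \mapsto sx$ is a lattice automorphism of $G$. It is a strong order unit if $s > e$, $s$ is normal, and for every $g \in G$ there is $k \in \mathbb{Z}$ with $g \leq s^k$. For $g \in G^-$, a right-normal factorization of $g$ is a finite sequence $g_1,\dots,g_k \in [s^{-1},e]$ ($k \geq 0$) satisfying three conditions: (1) $g = g_k g_{k-1}\cdots g_1$; (2) $g_i \neq e$ for all $i$; (3) for each $1 \leq i < k$ there do not exist $h,h' \in G^-$ with $h \neq e$, $h'h = g_{i+1}$ and $hg_i \in [s^{-1},e]$. *)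

theory Defs
  imports "HOL-Algebra.Group"
begin

definition is_join :: "'a set \<Rightarrow> ('a \<Rightarrow> 'a \<Rightarrow> bool) \<Rightarrow> 'a \<Rightarrow> 'a \<Rightarrow> 'a \<Rightarrow> bool" where
  "is_join A leq x y z \<longleftrightarrow> z \<in> A \<and> leq x z \<and> leq y z \<and> (\<forall>w\<in>A. leq x w \<and> leq y w \<longrightarrow> leq z w)"

definition is_meet :: "'a set \<Rightarrow> ('a \<Rightarrow> 'a \<Rightarrow> bool) \<Rightarrow> 'a \<Rightarrow> 'a \<Rightarrow> 'a \<Rightarrow> bool" where
  "is_meet A leq x y z \<longleftrightarrow> z \<in> A \<and> leq z x \<and> leq z y \<and> (\<forall>w\<in>A. leq w x \<and> leq w y \<longrightarrow> leq w z)"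

definition ljoin :: "('a, 'b) monoid_scheme \<Rightarrow> ('a \<Rightarrow> 'a \<Rightarrow> bool) \<Rightarrow> 'a \<Rightarrow> 'a \<Rightarrow> 'a" where
  "ljoin G leq x y = (THE z. is_join (carrier G) leq x y z)"

definition lmeet :: "('a, 'b) monoid_scheme \<Rightarrow> ('a \<Rightarrow> 'a \<Rightarrow> bool) \<Rightarrow> 'a \<Rightarrow> 'a \<Rightarrow> 'a" where
  "lmeet G leq x y = (THE z. is_meet (carrier G) leq x y z)"

definition right_lgroup :: "('a, 'b) monoid_scheme \<Rightarrow> ('a \<Rightarrow> 'a \<Rightarrow> bool) \<Rightarrow> bool" where
  "right_lgroup G leq \<longleftrightarrow> group G
     \<and> (\<forall>x\<in>carrier G. leq x x)
     \<and> (\<forall>x\<in>carrier G. \<forall>y\<in>carrier G. leq x y \<and> leq y x \<longrightarrow> x = y)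
     \<and> (\<forall>x\<in>carrier G. \<forall>y\<in>carrier G. \<forall>z\<in>carrier G. leq x y \<and> leq y z \<longrightarrow> leq x z)
     \<and> (\<forall>x\<in>carrier G. \<forall>y\<in>carrier G. \<forall>z\<in>carrier G. leq x y \<longrightarrow> leq (x \<otimes>\<^bsub>G\<^esub> z) (y \<otimes>\<^bsub>G\<^esub> z))
     \<and> (\<forall>x\<in>carrier G. \<forall>y\<in>carrier G. (\<exists>z. is_join (carrier G) leq x y z) \<and> (\<exists>z. is_meet (carrier G) leq x y z))"

definition lattice_automorphism :: "('a, 'b) monoid_scheme \<Rightarrow> ('a \<Rightarrow> 'a \<Rightarrow> bool) \<Rightarrow> ('a \<Rightarrow> 'a) \<Rightarrow> bool" where
  "lattice_automorphism G leq f \<longleftrightarrow> bij_betw f (carrier G) (carrier G)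
     \<and> (\<forall>x\<in>carrier G. \<forall>y\<in>carrier G. f (ljoin G leq x y) = ljoin G leq (f x) (f y)
                                      \<and> f (lmeet G leq x y) = lmeet G leq (f x) (f y))"

definition normal_elem :: "('a, 'b) monoid_scheme \<Rightarrow> ('a \<Rightarrow> 'a \<Rightarrow> bool) \<Rightarrow> 'a \<Rightarrow> bool" where
  "normal_elem G leq s \<longleftrightarrow> s \<in> carrier G \<and> lattice_automorphism G leq (\<lambda>x. s \<otimes>\<^bsub>G\<^esub> x)"

definition strong_order_unit :: "('a, 'b) monoid_scheme \<Rightarrow> ('a \<Rightarrow> 'a \<Rightarrow> bool) \<Rightarrow> 'a \<Rightarrow> bool" where
  "strong_order_unit G leq s \<longleftrightarrow> s \<in> carrier G \<and> leq \<one>\<^bsub>G\<^esub> s \<and> s \<noteq> \<one>\<^bsub>G\<^esub>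
     \<and> normal_elem G leq s
     \<and> (\<forall>g\<in>carrier G. \<exists>k::int. leq g (s [^]\<^bsub>G\<^esub> k))"

definition neg_cone :: "('a, 'b) monoid_scheme \<Rightarrow> ('a \<Rightarrow> 'a \<Rightarrow> bool) \<Rightarrow> 'a set" where
  "neg_cone G leq = {g \<in> carrier G. leq g \<one>\<^bsub>G\<^esub>}"

definition lint :: "('a, 'b) monoid_scheme \<Rightarrow> ('a \<Rightarrow> 'a \<Rightarrow> bool) \<Rightarrow> 'a \<Rightarrow> 'a \<Rightarrow> 'a set" where
  "lint G leq a b = {x \<in> carrier G. leq a x \<and> leq x b}"

text \<open>A list gs = [g_1, ..., g_k] represents the sequence g_1,...,g_k; its product
g_k * ... * g_1 is fold (\<lambda>x acc. x * acc) gs 1.\<close>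

definition rev_prod :: "('a, 'b) monoid_scheme \<Rightarrow> 'a list \<Rightarrow> 'a" where
  "rev_prod G gs = fold (\<lambda>x acc. x \<otimes>\<^bsub>G\<^esub> acc) gs \<one>\<^bsub>G\<^esub>"

definition right_normal_factorization ::
  "('a, 'b) monoid_scheme \<Rightarrow> ('a \<Rightarrow> 'a \<Rightarrow> bool) \<Rightarrow> 'a \<Rightarrow> 'a \<Rightarrow> 'a list \<Rightarrow> bool" where
  "right_normal_factorization G leq s g gs \<longleftrightarrow>
     (\<forall>i<length gs. gs ! i \<in> lint G leq (inv\<^bsub>G\<^esub> s) \<one>\<^bsub>G\<^esub>)
     \<and> g = rev_prod G gs
     \<and> (\<forall>i<length gs. gs ! i \<noteq> \<one>\<^bsub>G\<^esub>)
     \<and> (\<forall>i. i + 1 < length gs \<longrightarrow>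
          \<not> (\<exists>h\<in>neg_cone G leq. \<exists>h'\<in>neg_cone G leq. h \<noteq> \<one>\<^bsub>G\<^esub>
                \<and> h' \<otimes>\<^bsub>G\<^esub> h = gs ! (i + 1)
                \<and> h \<otimes>\<^bsub>G\<^esub> gs ! i \<in> lint G leq (inv\<^bsub>G\<^esub> s) \<one>\<^bsub>G\<^esub>))"

end

theory Submission
  imports Defs
begin
locale rlg = group G for G (structure) +
  fixes leq :: "'a \<Rightarrow> 'a \<Rightarrow> bool" and s :: 'a
  assumes RL: "right_lgroup G leq" and SU: "strong_order_unit G leq s"
begin

abbreviation J where "J x y \<equiv> ljoin G leq x y"

lemma lrefl: "x \<in> carrier G \<Longrightarrow> leq x x"
  using RL unfolding right_lgroup_def by blast
lemma lantisym: "x \<in> carrier G \<Longrightarrow> y \<in> carrier G \<Longrightarrow> leq x y \<Longrightarrow> leq y x \<Longrightarrow> x = y"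
  using RL unfolding right_lgroup_def by blast
lemma ltrans: "x \<in> carrier G \<Longrightarrow> y \<in> carrier G \<Longrightarrow> z \<in> carrier G \<Longrightarrow> leq x y \<Longrightarrow> leq y z \<Longrightarrow> leq x z"
  using RL unfolding right_lgroup_def by blast
lemma rmult: "x \<in> carrier G \<Longrightarrow> y \<in> carrier G \<Longrightarrow> z \<in> carrier G \<Longrightarrow> leq x y \<Longrightarrow> leq (x \<otimes> z) (y \<otimes> z)"
  using RL unfolding right_lgroup_def by blast

lemma rmult_iff: assumes "x \<in> carrier G" "y \<in> carrier G" "z \<in> carrier G"
  shows "leq (x \<otimes> z) (y \<otimes> z) \<longleftrightarrow> leq x y"
proof
  assume "leq (x \<otimes> z) (y \<otimes> z)"
  then have "leq (x \<otimes> z \<otimes> inv z) (y \<otimes> z \<otimes> inv z)" using rmult assms by simp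
  then show "leq x y" using assms by (simp add: m_assoc)
qed (use rmult assms in auto)

lemma le_div1: assumes "x \<in> carrier G" "y \<in> carrier G" "z \<in> carrier G"
  shows "leq x (y \<otimes> inv z) \<longleftrightarrow> leq (x \<otimes> z) y"
  using rmult_iff[of x "y \<otimes> inv z" z] assms by (simp add: m_assoc)
lemma le_div2: assumes "x \<in> carrier G" "y \<in> carrier G" "z \<in> carrier G"
  shows "leq (y \<otimes> inv z) x \<longleftrightarrow> leq y (x \<otimes> z)"
  using rmult_iff[of "y \<otimes> inv z" x z] assms by (simp add: m_assoc)

lemma div_one: assumes "x \<in> carrier G" "y \<in> carrier G"
  shows "x \<otimes> inv y = \<one> \<longleftrightarrow> x = y"
proof
  assume "x \<otimes> inv y = \<one>"
  then have "x \<otimes> inv y \<otimes> y = y" using assms by simp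
  then show "x = y" using assms by (simp add: m_assoc)
next
  assume "x = y"
  then show "x \<otimes> inv y = \<one>" using r_inv[OF assms(2)] by (simp only:)
qed

lemma join_ex: assumes "x \<in> carrier G" "y \<in> carrier G"
  shows "is_join (carrier G) leq x y (J x y)"
proof -
  have L: "\<forall>x\<in>carrier G. \<forall>y\<in>carrier G. (\<exists>z. is_join (carrier G) leq x y z) \<and> (\<exists>z. is_meet (carrier G) leq x y z)"
    using RL unfolding right_lgroup_def by (elim conjE) assumption
  have "\<exists>z. is_join (carrier G) leq x y z" using L assms by blast
  then obtain z where z: "is_join (carrier G) leq x y z" by blast
  have zz: "z \<in> carrier G" "leq x z" "leq y z" "\<forall>v\<in>carrier G. leq x v \<and> leq y v \<longrightarrow> leq z v"
    using z unfolding is_join_def by auto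
  have U: "w = z" if w: "is_join (carrier G) leq x y w" for w
  proof -
    have ww: "w \<in> carrier G" "leq x w" "leq y w" "\<forall>v\<in>carrier G. leq x v \<and> leq y v \<longrightarrow> leq w v"
      using w unfolding is_join_def by auto
    have "leq w z" using ww(4) zz(1-3) by blast
    moreover have "leq z w" using zz(4) ww(1-3) by blast
    ultimately show "w = z" using lantisym ww(1) zz(1) by blast
  qed
  show ?thesis unfolding ljoin_def using z U by (rule theI)
qed

lemma join_carrier: "x \<in> carrier G \<Longrightarrow> y \<in> carrier G \<Longrightarrow> J x y \<in> carrier G"
  using join_ex unfolding is_join_def by blast
lemma join_ub1: "x \<in> carrier G \<Longrightarrow> y \<in> carrier G \<Longrightarrow> leq x (J x y)"
  using join_ex unfolding is_join_def by blast
lemma join_ub2: "x \<in> carrier G \<Longrightarrow> y \<in> carrier G \<Longrightarrow> leq y (J x y)"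
  using join_ex unfolding is_join_def by blast
lemma join_least: "x \<in> carrier G \<Longrightarrow> y \<in> carrier G \<Longrightarrow> w \<in> carrier G \<Longrightarrow> leq x w \<Longrightarrow> leq y w \<Longrightarrow> leq (J x y) w"
  using join_ex unfolding is_join_def by blast

lemma join_eqI: assumes "x \<in> carrier G" "y \<in> carrier G" "z \<in> carrier G" "leq x z" "leq y z"
  "\<And>w. w \<in> carrier G \<Longrightarrow> leq x w \<Longrightarrow> leq y w \<Longrightarrow> leq z w"
  shows "J x y = z"
proof -
  have jc: "J x y \<in> carrier G" using assms(1,2) by (rule join_carrier)
  have 1: "leq (J x y) z" using join_least assms by blast
  have 2: "leq z (J x y)" using assms(6)[OF jc] join_ub1 join_ub2 assms(1,2) by blast
  show ?thesis using lantisym[OF jc assms(3) 1 2] .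
qed

lemma join_absorb2: "x \<in> carrier G \<Longrightarrow> y \<in> carrier G \<Longrightarrow> leq x y \<Longrightarrow> J x y = y"
  by (rule join_eqI) (auto intro: lrefl)
lemma join_absorb1: "x \<in> carrier G \<Longrightarrow> y \<in> carrier G \<Longrightarrow> leq y x \<Longrightarrow> J x y = x"
  by (rule join_eqI) (auto intro: lrefl)
lemma le_iff_join: "x \<in> carrier G \<Longrightarrow> y \<in> carrier G \<Longrightarrow> leq x y \<longleftrightarrow> J x y = y"
proof
  assume "x \<in> carrier G" "y \<in> carrier G" "leq x y" then show "J x y = y" by (rule join_absorb2)
next
  assume "x \<in> carrier G" "y \<in> carrier G" "J x y = y" then show "leq x y" using join_ub1[of x y] by simp
qed

lemma join_left_absorb: assumes "x \<in> carrier G" "y \<in> carrier G" "z \<in> carrier G" "leq y x"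
  shows "J x (J y z) = J x z"
proof (rule join_eqI)
  have c: "J x z \<in> carrier G" "J y z \<in> carrier G" using assms join_carrier by auto
  show "J x z \<in> carrier G" "J y z \<in> carrier G" by (fact c)+
  show "leq x (J x z)" by (rule join_ub1[OF assms(1,3)])
  have "leq y (J x z)" using ltrans[OF assms(2,1) c(1) assms(4) join_ub1[OF assms(1,3)]] .
  then show "leq (J y z) (J x z)" using join_least[OF assms(2,3) c(1)] join_ub2[OF assms(1,3)] by blast
  fix w assume w: "w \<in> carrier G" "leq x w" "leq (J y z) w"
  have "leq z w" using ltrans[OF assms(3) c(2) w(1) join_ub2[OF assms(2,3)] w(3)] .
  then show "leq (J x z) w" using join_least[OF assms(1,3) w(1) w(2)] by blast
qed (use assms in auto)

lemma join_right_absorb: assumes "x \<in> carrier G" "y \<in> carrier G" "z \<in> carrier G" "leq y z"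
  shows "J (J x y) z = J x z"
proof (rule join_eqI)
  have c: "J x z \<in> carrier G" "J x y \<in> carrier G" using assms join_carrier by auto
  show "J x z \<in> carrier G" "J x y \<in> carrier G" by (fact c)+
  show "leq z (J x z)" using assms(1,3) by (rule join_ub2)
  have "leq y (J x z)" using ltrans[OF assms(2,3) c(1) assms(4) join_ub2[OF assms(1,3)]] .
  then show "leq (J x y) (J x z)" using join_least[OF assms(1,2) c(1)] join_ub1[OF assms(1,3)] by blast
  fix w assume w: "w \<in> carrier G" "leq (J x y) w" "leq z w"
  have "leq x w" using ltrans[OF assms(1) c(2) w(1) join_ub1[OF assms(1,2)] w(2)] .
  then show "leq (J x z) w" using join_least[OF assms(1,3) w(1) _ w(3)] by blast
qed (use assms in auto)

lemma rmult_join: assumes "x \<in> carrier G" "y \<in> carrier G" "z \<in> carrier G"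
  shows "J x y \<otimes> z = J (x \<otimes> z) (y \<otimes> z)"
proof (rule sym, rule join_eqI)
  show "leq (x \<otimes> z) (J x y \<otimes> z)" using assms rmult join_ub1 join_carrier by simp
  show "leq (y \<otimes> z) (J x y \<otimes> z)" using assms rmult join_ub2 join_carrier by simp
  fix w assume w: "w \<in> carrier G" "leq (x \<otimes> z) w" "leq (y \<otimes> z) w"
  then have "leq x (w \<otimes> inv z)" "leq y (w \<otimes> inv z)" using le_div1 assms by auto
  then have "leq (J x y) (w \<otimes> inv z)" using join_least assms w by simp
  then show "leq (J x y \<otimes> z) w" using le_div1 assms w join_carrier by auto
qed (use assms join_carrier in auto)

lemma s_carrier[simp]: "s \<in> carrier G" using SU unfolding strong_order_unit_def by blast
lemma one_le_s: "leq \<one> s" using SU unfolding strong_order_unit_def by blast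
lemma s_join: "x \<in> carrier G \<Longrightarrow> y \<in> carrier G \<Longrightarrow> s \<otimes> J x y = J (s \<otimes> x) (s \<otimes> y)"
  using SU unfolding strong_order_unit_def normal_elem_def lattice_automorphism_def by blast

lemma smult_iff: assumes "x \<in> carrier G" "y \<in> carrier G"
  shows "leq (s \<otimes> x) (s \<otimes> y) \<longleftrightarrow> leq x y"
proof -
  have "leq (s \<otimes> x) (s \<otimes> y) \<longleftrightarrow> J (s \<otimes> x) (s \<otimes> y) = s \<otimes> y" using le_iff_join assms by simp
  also have "\<dots> \<longleftrightarrow> s \<otimes> J x y = s \<otimes> y" using s_join assms by simp
  also have "\<dots> \<longleftrightarrow> J x y = y" using assms join_carrier by simp
  also have "\<dots> \<longleftrightarrow> leq x y" using le_iff_join assms by simp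
  finally show ?thesis .
qed

lemma sinv_iff: assumes "x \<in> carrier G" "y \<in> carrier G"
  shows "leq (inv s \<otimes> x) (inv s \<otimes> y) \<longleftrightarrow> leq x y"
  using smult_iff[of "inv s \<otimes> x" "inv s \<otimes> y"] assms by (simp add: m_assoc[symmetric])

lemma sinv_join: assumes "x \<in> carrier G" "y \<in> carrier G"
  shows "inv s \<otimes> J x y = J (inv s \<otimes> x) (inv s \<otimes> y)"
proof -
  have "s \<otimes> J (inv s \<otimes> x) (inv s \<otimes> y) = J x y"
    using s_join[of "inv s \<otimes> x" "inv s \<otimes> y"] assms by (simp add: m_assoc[symmetric])
  then have "inv s \<otimes> (s \<otimes> J (inv s \<otimes> x) (inv s \<otimes> y)) = inv s \<otimes> J x y" by simp
  then show ?thesis using assms join_carrier by (simp add: m_assoc[symmetric])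
qed

definition sp :: "nat \<Rightarrow> 'a" where "sp n = inv (s [^] n)"

lemma sp_carrier[simp]: "sp n \<in> carrier G" unfolding sp_def by simp
lemma sp_0[simp]: "sp 0 = \<one>" unfolding sp_def by simp
lemma sp_Suc: "sp (Suc n) = inv s \<otimes> sp n" unfolding sp_def by (simp add: inv_mult_group)

lemma sinv_le_one: "leq (inv s) \<one>"
  using sinv_iff[of \<one> s] one_le_s by simp

lemma sinv_mult_le: "x \<in> carrier G \<Longrightarrow> leq (inv s \<otimes> x) x"
  using rmult[OF _ _ _ sinv_le_one, of x] by simp

lemma sp_Suc_le: "leq (sp (Suc n)) (sp n)"
  unfolding sp_Suc by (rule sinv_mult_le) simp

lemma sp_anti: "m \<le> n \<Longrightarrow> leq (sp n) (sp m)"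
proof (induction n rule: dec_induct)
  case base then show ?case by (simp add: lrefl)
next
  case (step n) from step(3) show ?case by (rule ltrans[OF sp_carrier sp_carrier sp_carrier sp_Suc_le])
qed

lemma sp_mult_iff: assumes "x \<in> carrier G" "y \<in> carrier G"
  shows "leq (sp n \<otimes> x) (sp n \<otimes> y) \<longleftrightarrow> leq x y"
proof (induction n)
  case 0 then show ?case using assms by simp
next
  case (Suc n)
  have "leq (sp (Suc n) \<otimes> x) (sp (Suc n) \<otimes> y) \<longleftrightarrow> leq (inv s \<otimes> (sp n \<otimes> x)) (inv s \<otimes> (sp n \<otimes> y))"
    using assms by (simp add: sp_Suc m_assoc)
  also have "\<dots> \<longleftrightarrow> leq (sp n \<otimes> x) (sp n \<otimes> y)" using sinv_iff assms by simp
  finally show ?case using Suc by simp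
qed

lemma exists_k_aux: assumes k: "leq (inv g) (s [^] (k::int))" and g: "g \<in> carrier G" "leq g \<one>"
  shows "\<exists>n::nat. leq (sp n) g"
proof (cases "k < 0")
  case True
  then have "s [^] k = sp (nat (-k))" unfolding sp_def by (simp only: int_pow_def2 True if_True)
  then have k2: "leq (inv g) (sp (nat (-k)))" using k by simp
  have an: "leq (sp (nat (-k))) (sp 0)" by (rule sp_anti) simp
  have "leq (inv g) (sp 0)" by (rule ltrans[OF inv_closed[OF g(1)] sp_carrier sp_carrier k2 an])
  then have "leq (inv g) \<one>" by simp
  then have "leq (inv g \<otimes> g) (\<one> \<otimes> g)" by (rule rmult[OF inv_closed[OF g(1)] one_closed g(1)])
  then have "leq (sp 0) g" using g by simp
  then show ?thesis by (rule exI)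
next
  case False
  then have "s [^] k = s [^] (nat k)" by (simp only: int_pow_def2 False if_False)
  then have "leq (sp (nat k) \<otimes> inv g) (sp (nat k) \<otimes> s [^] (nat k))" using k sp_mult_iff g by simp
  then have "leq (sp (nat k) \<otimes> inv g) \<one>" unfolding sp_def by simp
  then have "leq (sp (nat k)) g" using le_div2[of \<one> "sp (nat k)" g] g by simp
  then show ?thesis by (rule exI)
qed

lemma exists_k: assumes g: "g \<in> carrier G" "leq g \<one>" shows "\<exists>k::nat. leq (sp k) g"
proof -
  have B: "\<forall>g\<in>carrier G. \<exists>k::int. leq g (s [^] k)"
    using SU unfolding strong_order_unit_def by (elim conjE) assumption
  have ex: "\<exists>k::int. leq (inv g) (s [^] k)" using B g by blast
  from ex show ?thesis by (rule exE) (rule exists_k_aux[OF _ g(1) g(2)])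
qed

end
locale rlgg = rlg + fixes g assumes g_carrier[simp]: "g \<in> carrier G" and g_neg: "leq g \<one>"
begin

definition K where "K = (LEAST i::nat. leq (sp i) g)"
definition a where "a i = J g (sp i)"

lemma K_le: "leq (sp K) g"
  unfolding K_def using exists_k[OF g_carrier g_neg] by (rule LeastI_ex)
lemma K_min: "i < K \<Longrightarrow> \<not> leq (sp i) g"
  unfolding K_def by (rule not_less_Least)

lemma a_carrier[simp]: "a i \<in> carrier G" unfolding a_def by (simp add: join_carrier)
lemma a_0: "a 0 = \<one>" unfolding a_def using join_absorb2 g_neg by simp
lemma a_ge: "K \<le> i \<Longrightarrow> a i = g"
proof -
  assume "K \<le> i"
  then have "leq (sp i) g" using ltrans[OF sp_carrier sp_carrier g_carrier sp_anti K_le] by blast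
  then show ?thesis unfolding a_def using join_absorb1[OF g_carrier sp_carrier] by blast
qed
lemma g_le_a: "leq g (a i)" unfolding a_def by (simp add: join_ub1)
lemma sp_le_a: "leq (sp i) (a i)" unfolding a_def by (simp add: join_ub2)
lemma a_Suc_le: "leq (a (Suc i)) (a i)"
proof -
  have "leq (sp (Suc i)) (a i)" using ltrans[OF sp_carrier sp_carrier a_carrier sp_Suc_le sp_le_a] .
  then show ?thesis unfolding a_def using join_least[OF g_carrier sp_carrier join_carrier[OF g_carrier sp_carrier]]
    g_le_a sp_le_a unfolding a_def by blast
qed
lemma sg_le: "leq (inv s \<otimes> g) g" by (simp add: sinv_mult_le)

lemma a_rec: "a (Suc i) = J g (inv s \<otimes> a i)"
proof -
  have "inv s \<otimes> a i = J (inv s \<otimes> g) (sp (Suc i))" unfolding a_def sp_Suc by (simp add: sinv_join)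
  then show ?thesis using join_left_absorb[OF g_carrier _ _ sg_le] unfolding a_def by simp
qed

lemma sa_le: "leq (inv s \<otimes> a i) (a (Suc i))"
  unfolding a_rec by (simp add: join_ub2)

lemma a_neq: assumes "i < K" shows "a (Suc i) \<noteq> a i"
proof
  assume eq: "a (Suc i) = a i"
  have aeq: "a j = a i" if "i \<le> j" for j using that
  proof (induction j rule: dec_induct)
    case (step n)
    have "a (Suc n) = J g (inv s \<otimes> a n)" by (rule a_rec)
    also have "\<dots> = J g (inv s \<otimes> a i)" using step(3) by simp
    also have "\<dots> = a (Suc i)" by (rule a_rec[symmetric])
    also have "\<dots> = a i" by (rule eq)
    finally show ?case .
  qed simp
  have "a K = a i" by (rule aeq) (use assms in simp)
  then have "g = J g (sp i)" using a_ge a_def by simp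
  then have "leq (sp i) g" using join_ub2[of g "sp i"] by simp
  then show False using K_min assms by simp
qed

definition F where "F i = a i \<otimes> inv (a (i - 1))"
definition ours where "ours = map F [1..<K + 1]"

lemma ours_len: "length ours = K" unfolding ours_def by (simp del: upt_Suc)
lemma ours_nth: "j < K \<Longrightarrow> ours ! j = a (Suc j) \<otimes> inv (a j)"
  unfolding ours_def F_def by (simp del: upt_Suc)

lemma rev_prod_take_Suc: "j < length xs \<Longrightarrow> rev_prod G (take (Suc j) xs) = xs ! j \<otimes> rev_prod G (take j xs)"
  unfolding rev_prod_def by (simp add: take_Suc_conv_app_nth)

lemma ours_prod: "j \<le> K \<Longrightarrow> rev_prod G (take j ours) = a j"
proof (induction j)
  case 0 then show ?case by (simp add: rev_prod_def a_0)
next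
  case (Suc j)
  then have "rev_prod G (take (Suc j) ours) = ours ! j \<otimes> a j" using rev_prod_take_Suc ours_len by simp
  also have "\<dots> = a (Suc j)" using Suc by (simp add: ours_nth m_assoc)
  finally show ?case .
qed

lemma ours_rnf: "right_normal_factorization G leq s g ours"
  unfolding right_normal_factorization_def
proof (intro conjI allI impI)
  fix i assume "i < length ours"
  then have i: "i < K" by (simp add: ours_len)
  show "ours ! i \<in> lint G leq (inv s) \<one>"
    unfolding lint_def ours_nth[OF i]
    using le_div1[of "inv s" "a (Suc i)" "a i"] le_div2[of \<one> "a (Suc i)" "a i"] sa_le a_Suc_le
    by simp
  show "ours ! i \<noteq> \<one>" using ours_nth[OF i] div_one a_neq[OF i] by simp
next
  show "g = rev_prod G ours" using ours_prod[of K] ours_len a_ge by simp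
next
  fix i assume i1: "i + 1 < length ours"
  then have i: "Suc i < K" by (simp add: ours_len)
  show "\<not> (\<exists>h\<in>neg_cone G leq. \<exists>h'\<in>neg_cone G leq. h \<noteq> \<one> \<and> h' \<otimes> h = ours ! (i + 1)
                \<and> h \<otimes> ours ! i \<in> lint G leq (inv s) \<one>)"
  proof
    assume "\<exists>h\<in>neg_cone G leq. \<exists>h'\<in>neg_cone G leq. h \<noteq> \<one> \<and> h' \<otimes> h = ours ! (i + 1)
                \<and> h \<otimes> ours ! i \<in> lint G leq (inv s) \<one>"
    then obtain h h' where h: "h \<in> carrier G" "leq h \<one>" and h': "h' \<in> carrier G" "leq h' \<one>"
      and hne: "h \<noteq> \<one>" and eq: "h' \<otimes> h = a (Suc (Suc i)) \<otimes> inv (a (Suc i))"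
      and lo: "leq (inv s) (h \<otimes> (a (Suc i) \<otimes> inv (a i)))"
      using ours_nth i by (auto simp: neg_cone_def lint_def)
    have ha: "h \<otimes> a (Suc i) = inv h' \<otimes> a (Suc (Suc i))"
    proof -
      have "h = inv h' \<otimes> (h' \<otimes> h)" using h h' by (simp add: m_assoc[symmetric])
      then show ?thesis using h h' eq by (simp add: m_assoc)
    qed
    have "leq (h' \<otimes> inv h') (\<one> \<otimes> inv h')" by (rule rmult[OF h'(1) one_closed inv_closed[OF h'(1)] h'(2)])
    then have "leq \<one> (inv h')" using h' by simp
    then have "leq (\<one> \<otimes> a (Suc (Suc i))) (inv h' \<otimes> a (Suc (Suc i)))" by (rule rmult[OF one_closed inv_closed[OF h'(1)] a_carrier])
    then have a2: "leq (a (Suc (Suc i))) (inv h' \<otimes> a (Suc (Suc i)))" using h' by simp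
    have "leq g (inv h' \<otimes> a (Suc (Suc i)))"
      by (rule ltrans[OF g_carrier a_carrier m_closed[OF inv_closed[OF h'(1)] a_carrier] g_le_a a2])
    then have "leq g (h \<otimes> a (Suc i))" unfolding ha .
    moreover have "leq (sp (Suc i)) (h \<otimes> a (Suc i))"
    proof -
      have c2: "leq (inv s \<otimes> a i) (h \<otimes> a (Suc i))"
        using le_div1[of "inv s" "h \<otimes> a (Suc i)" "a i"] lo h by (simp add: m_assoc)
      have c1: "leq (sp (Suc i)) (inv s \<otimes> a i)"
        unfolding sp_Suc using sinv_iff sp_le_a by simp
      show ?thesis
        by (rule ltrans[OF sp_carrier m_closed[OF inv_closed[OF s_carrier] a_carrier] m_closed[OF h(1) a_carrier] c1 c2])
    qed
    ultimately have "leq (J g (sp (Suc i))) (h \<otimes> a (Suc i))"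
      by (rule join_least[OF g_carrier sp_carrier m_closed[OF h(1) a_carrier]])
    then have L: "leq (a (Suc i)) (h \<otimes> a (Suc i))" unfolding a_def .
    have "leq (\<one> \<otimes> a (Suc i)) (h \<otimes> a (Suc i))" unfolding l_one[OF a_carrier] by (rule L)
    then have "leq \<one> h" by (rule iffD1[OF rmult_iff[OF one_closed h(1) a_carrier]])
    then show False using lantisym[OF h(1) one_closed h(2)] hne by simp
  qed
qed

end
context rlgg begin

lemma uniq: assumes R: "right_normal_factorization G leq s g fs" shows "fs = ours"
proof -
  define m where "m = length fs"
  define b where "b j = rev_prod G (take j fs)" for j
  have f_lint: "\<And>j. j < m \<Longrightarrow> fs ! j \<in> lint G leq (inv s) \<one>"
    and g_eq: "g = rev_prod G fs" and f_ne: "\<And>j. j < m \<Longrightarrow> fs ! j \<noteq> \<one>"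
    and cond: "\<And>i. i + 1 < m \<Longrightarrow> \<not> (\<exists>h\<in>neg_cone G leq. \<exists>h'\<in>neg_cone G leq. h \<noteq> \<one>
                \<and> h' \<otimes> h = fs ! (i + 1) \<and> h \<otimes> fs ! i \<in> lint G leq (inv s) \<one>)"
    using R unfolding right_normal_factorization_def m_def by auto
  have fc: "\<And>j. j < m \<Longrightarrow> fs ! j \<in> carrier G" and flo: "\<And>j. j < m \<Longrightarrow> leq (inv s) (fs ! j)"
    and fhi: "\<And>j. j < m \<Longrightarrow> leq (fs ! j) \<one>" using f_lint unfolding lint_def by auto
  have b0: "b 0 = \<one>" unfolding b_def rev_prod_def by simp
  have bS: "\<And>j. j < m \<Longrightarrow> b (Suc j) = fs ! j \<otimes> b j"
    unfolding b_def m_def by (rule rev_prod_take_Suc)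
  have bm: "b m = g" unfolding b_def m_def g_eq by simp
  have bc: "\<And>j. j \<le> m \<Longrightarrow> b j \<in> carrier G"
  proof -
    fix j show "j \<le> m \<Longrightarrow> b j \<in> carrier G"
      by (induction j) (auto simp: b0 bS fc)
  qed
  have local: "fs ! j = J (fs ! (Suc j) \<otimes> fs ! j) (inv s)" if j: "Suc j < m" for j
  proof -
    let ?x = "fs ! j" and ?y = "fs ! Suc j"
    have xc: "?x \<in> carrier G" and yc: "?y \<in> carrier G" using fc j by auto
    define c where "c = J (?y \<otimes> ?x) (inv s)"
    have cc: "c \<in> carrier G" unfolding c_def using xc yc by (simp add: join_carrier)
    have yx_le: "leq (?y \<otimes> ?x) ?x" using rmult[OF yc _ xc fhi[OF j]] xc by simp
    have c_le: "leq c ?x" unfolding c_def using join_least yx_le flo[of j] j xc yc by simp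
    have c_ge1: "leq (?y \<otimes> ?x) c" unfolding c_def using join_ub1 xc yc by simp
    have c_ge2: "leq (inv s) c" unfolding c_def using join_ub2 xc yc by simp
    define h where "h = c \<otimes> inv ?x"
    define h' where "h' = ?y \<otimes> inv h"
    have hc: "h \<in> carrier G" and h'c: "h' \<in> carrier G" unfolding h_def h'_def using cc xc yc by auto
    have hneg: "leq h \<one>" unfolding h_def using le_div2[of \<one> c ?x] c_le cc xc by simp
    have y_le_h: "leq ?y h" unfolding h_def using le_div1[of ?y c ?x] c_ge1 cc xc yc by simp
    have h'neg: "leq h' \<one>" unfolding h'_def using le_div2[of \<one> ?y h] y_le_h hc yc by simp
    have prod: "h' \<otimes> h = ?y" unfolding h'_def using hc yc by (simp add: m_assoc)
    have hx: "h \<otimes> ?x = c" unfolding h_def using cc xc by (simp add: m_assoc)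
    have jm: "j < m" using j by simp
    have c1: "leq c \<one>" by (rule ltrans[OF cc xc one_closed c_le fhi[OF jm]])
    have LL: "h \<otimes> ?x \<in> lint G leq (inv s) \<one>" unfolding hx lint_def
      using cc c_ge2 c1 by simp
    have nc: "h \<in> neg_cone G leq" "h' \<in> neg_cone G leq" unfolding neg_cone_def
      using hc h'c hneg h'neg by auto
    have j1: "j + 1 < m" using j by simp
    have "\<not> (h \<noteq> \<one> \<and> h' \<otimes> h = fs ! (j + 1) \<and> h \<otimes> fs ! j \<in> lint G leq (inv s) \<one>)"
      using cond[OF j1] nc by blast
    then have "h = \<one>" using prod LL by simp
    then have "c = ?x" using div_one[OF cc xc] h_def by simp
    then show ?thesis unfolding c_def by simp
  qed
  have bstep: "b (Suc j) = J (b (Suc (Suc j))) (inv s \<otimes> b j)" if j: "Suc j < m" for j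
  proof -
    have c: "fs ! j \<in> carrier G" "fs ! Suc j \<in> carrier G" "b j \<in> carrier G" using j fc bc by auto
    have "b (Suc j) = J (fs ! (Suc j) \<otimes> fs ! j) (inv s) \<otimes> b j" using bS j local by simp
    also have "\<dots> = J (fs ! (Suc j) \<otimes> fs ! j \<otimes> b j) (inv s \<otimes> b j)" using rmult_join c by simp
    also have "\<dots> = J (b (Suc (Suc j))) (inv s \<otimes> b j)" using bS j c by (simp add: m_assoc)
    finally show ?thesis .
  qed
  have bdec: "leq (b (Suc j)) (b j)" if j: "j < m" for j
    using rmult[OF fc[OF j] _ bc[of j] fhi[OF j]] bS[OF j] j bc by simp
  have Q: "b (Suc j) = J g (inv s \<otimes> b j)" if j: "j < m" for j
  proof -
    have "j \<le> m - 1" using j by simp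
    then show ?thesis
    proof (induction j rule: inc_induct)
      case base
      define p where "p = m - 1"
      have mm: "Suc p = m" unfolding p_def using j by simp
      have pm: "p < m" unfolding p_def using j by simp
      have bp: "b p \<in> carrier G" by (rule bc) (use pm in simp)
      have "leq (inv s \<otimes> b p) (fs ! p \<otimes> b p)"
        by (rule rmult[OF inv_closed[OF s_carrier] fc[OF pm] bp flo[OF pm]])
      moreover have e: "fs ! p \<otimes> b p = g" using bS[OF pm] mm bm by simp
      ultimately have L: "leq (inv s \<otimes> b p) g" by simp
      have "b (Suc p) = J g (inv s \<otimes> b p)" unfolding mm bm
        by (rule join_absorb1[OF g_carrier m_closed[OF inv_closed[OF s_carrier] bp] L, symmetric])
      then show ?case unfolding p_def .
    next
      case (step n)
      have n1: "Suc n < m" using step(2) by simp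
      have nm: "n < m" using step(2) by simp
      have c1: "b n \<in> carrier G" by (rule bc) (use nm in simp)
      have c2: "b (Suc n) \<in> carrier G" by (rule bc) (use n1 in simp)
      have le: "leq (inv s \<otimes> b (Suc n)) (inv s \<otimes> b n)"
        by (rule iffD2[OF sinv_iff[OF c2 c1] bdec[OF nm]])
      have "b (Suc n) = J (b (Suc (Suc n))) (inv s \<otimes> b n)" by (rule bstep[OF n1])
      also have "\<dots> = J (J g (inv s \<otimes> b (Suc n))) (inv s \<otimes> b n)" by (simp only: step(3))
      also have "\<dots> = J g (inv s \<otimes> b n)"
        by (rule join_right_absorb[OF g_carrier m_closed[OF inv_closed[OF s_carrier] c2]
              m_closed[OF inv_closed[OF s_carrier] c1] le])
      finally show ?case .
    qed
  qed
  have ba: "j \<le> m \<Longrightarrow> b j = a j" for j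
  proof (induction j)
    case 0 then show ?case using b0 a_0 by simp
  next
    case (Suc j)
    have jm: "j < m" using Suc.prems by simp
    have bj: "b j = a j" using Suc.IH jm by simp
    have "b (Suc j) = J g (inv s \<otimes> b j)" by (rule Q[OF jm])
    also have "\<dots> = J g (inv s \<otimes> a j)" by (simp only: bj)
    also have "\<dots> = a (Suc j)" by (rule a_rec[symmetric])
    finally show ?case .
  qed
  have mK: "m = K"
  proof (rule ccontr)
    assume "m \<noteq> K"
    then consider "m < K" | "K < m" by linarith
    then show False
    proof cases
      case 1
      have "a m = b m" by (rule ba[symmetric]) simp
      then have am: "a m = g" using bm by simp
      have "leq (sp m) (a m)" by (rule sp_le_a)
      then have "leq (sp m) g" unfolding am .
      then show False using K_min[OF 1] by simp
    next
      case 2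
      have e1: "b K = a K" by (rule ba) (use 2 in simp)
      have e2: "b (Suc K) = a (Suc K)" by (rule ba) (use 2 in simp)
      have a1: "a K = g" by (rule a_ge) simp
      have a2: "a (Suc K) = g" by (rule a_ge) simp
      have bK: "b K \<in> carrier G" by (rule bc) (use 2 in simp)
      have fK: "fs ! K \<in> carrier G" by (rule fc[OF 2])
      have "fs ! K \<otimes> b K = b K" using bS[OF 2] e1 e2 a1 a2 by simp
      then have "fs ! K = \<one>" using r_cancel_one[OF bK fK] by simp
      then show False using f_ne[OF 2] by simp
    qed
  qed
  show ?thesis
  proof (rule nth_equalityI)
    show "length fs = length ours" using mK ours_len m_def by simp
    fix i assume "i < length fs"
    then have i: "i < K" and im: "i < m" using mK m_def by simp_all
    have bi: "b i \<in> carrier G" by (rule bc) (use im in simp)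
    have fi: "fs ! i \<in> carrier G" by (rule fc[OF im])
    have e0: "fs ! i \<otimes> b i \<otimes> inv (b i) = fs ! i" using fi bi by (simp add: m_assoc)
    have "fs ! i = b (Suc i) \<otimes> inv (b i)" unfolding bS[OF im] e0 ..
    also have "\<dots> = a (Suc i) \<otimes> inv (a i)"
    proof -
      have "b (Suc i) = a (Suc i)" by (rule ba) (use im in simp)
      moreover have "b i = a i" by (rule ba) (use im in simp)
      ultimately show ?thesis by simp
    qed
    also have "\<dots> = ours ! i" by (rule ours_nth[OF i, symmetric])
    finally show "fs ! i = ours ! i" .
  qed
qed

end

theorem mainTheorem1:
  fixes G :: "('a, 'b) monoid_scheme" and leq :: "'a \<Rightarrow> 'a \<Rightarrow> bool" and s g :: 'a
  assumes "right_lgroup G leq"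
    and "strong_order_unit G leq s"
    and "g \<in> neg_cone G leq"
  shows "(\<exists>k::nat. leq (inv\<^bsub>G\<^esub> (s [^]\<^bsub>G\<^esub> k)) g)
    \<and> (\<exists>!gs. right_normal_factorization G leq s g gs)
    \<and> right_normal_factorization G leq s g
           (map (\<lambda>i. ljoin G leq g (inv\<^bsub>G\<^esub> (s [^]\<^bsub>G\<^esub> i))
                     \<otimes>\<^bsub>G\<^esub> inv\<^bsub>G\<^esub> (ljoin G leq g (inv\<^bsub>G\<^esub> (s [^]\<^bsub>G\<^esub> (i - 1)))))
                [1..<(LEAST i::nat. leq (inv\<^bsub>G\<^esub> (s [^]\<^bsub>G\<^esub> i)) g) + 1])"
proof -
  have grp: "group G" using assms(1) unfolding right_lgroup_def by (elim conjE) assumption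
  have gc: "g \<in> carrier G" "leq g \<one>\<^bsub>G\<^esub>" using assms(3) unfolding neg_cone_def by simp_all
  interpret rlgg G leq s g
    by (intro rlgg.intro rlg.intro rlgg_axioms.intro rlg_axioms.intro grp assms(1,2) gc)
  have o: "ours = map (\<lambda>i. ljoin G leq g (inv\<^bsub>G\<^esub> (s [^]\<^bsub>G\<^esub> i))
                     \<otimes>\<^bsub>G\<^esub> inv\<^bsub>G\<^esub> (ljoin G leq g (inv\<^bsub>G\<^esub> (s [^]\<^bsub>G\<^esub> (i - 1)))))
                [1..<(LEAST i::nat. leq (inv\<^bsub>G\<^esub> (s [^]\<^bsub>G\<^esub> i)) g) + 1]"
    unfolding ours_def F_def[abs_def] a_def K_def sp_def by (rule refl)
  have e1: "\<exists>k::nat. leq (inv\<^bsub>G\<^esub> (s [^]\<^bsub>G\<^esub> k)) g" using exists_k[OF g_carrier g_neg] unfolding sp_def .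
  have e2: "\<exists>!gs. right_normal_factorization G leq s g gs" by (rule ex1I[where P="right_normal_factorization G leq s g" and a=ours, OF ours_rnf]) (rule uniq)
  show ?thesis unfolding o[symmetric] using e1 e2 ours_rnf by (intro conjI)
qed

end
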